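(* Let $n\ge1$, $\boldsymbol\mu=(\mu_1,\dots,\mu_n)\in[0,1]^n$ and let $c$ be a positive integer. Let $\Omega=\{\mathbf{w}\in\{0,1\}^n:\sum_{i=1}^n w_i\ge c\}$. Then $$\max_{P\in\mathfrak{P}_{\boldsymbol\mu}}P(\Omega)=P^*_{\boldsymbol\mu}(\Omega).$$
   Context: $\mathfrak{P}$ is the set of probability distributions $P$ on $\{0,1\}^n$, written via conditionals as $P(\mathbf{w})=p_1(w_1)p_2(w_2|w_1)\cdots p_n(w_n|w_{n-1},\dots,w_1)$. $\mathfrak{P}_{\boldsymbol\mu}$ is the set of $P\in\mathfrak{P}$ such that $p_i(1|w_{i-1},\dots,w_1)\le\mu_i$ for every $i\in\{1,\dots,n\}$ and every history $(w_1,\dots,w_{i-1})\in\{0,1\}^{i-1}$ (for $i=1$: $p_1(1)\le\mu_1$). $P^*_{\boldsymbol\mu}$ is the product distribution $P^*_{\boldsymbol\mu}(\mathbf{w})=\prod_{i=1}^n p_i^*(w_i)$ with $p_i^*(1)=\mu_i$, $p_i^*(0)=1-\mu_i$. *)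

theory Defs
  imports Complex_Main
begin

text \<open>Words in {0,1}^n are boolean lists of length n (True = 1).
  Coordinates are 0-indexed: w ! i is w_(i+1), mu i is mu_(i+1).\<close>

definition words :: "nat \<Rightarrow> bool list set" where
  "words n = {w. length w = n}"

text \<open>Distribution on {0,1}^n given by conditional kernels: q i h = p_(i+1)(1 | h),
  where h is the history (w_1,...,w_i).\<close>
definition cond_prob :: "nat \<Rightarrow> (nat \<Rightarrow> bool list \<Rightarrow> real) \<Rightarrow> bool list \<Rightarrow> real" where
  "cond_prob n q w = (\<Prod>i<n. if w ! i then q i (take i w) else 1 - q i (take i w))"

definition Pmu :: "nat \<Rightarrow> (nat \<Rightarrow> real) \<Rightarrow> (bool list \<Rightarrow> real) set" where
  "Pmu n mu = {P. \<exists>q. (\<forall>i h. 0 \<le> q i h \<and> q i h \<le> 1)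
      \<and> (\<forall>i<n. \<forall>h. length h = i \<longrightarrow> q i h \<le> mu i)
      \<and> (\<forall>w \<in> words n. P w = cond_prob n q w)}"

definition Pstar :: "nat \<Rightarrow> (nat \<Rightarrow> real) \<Rightarrow> bool list \<Rightarrow> real" where
  "Pstar n mu w = (\<Prod>i<n. if w ! i then mu i else 1 - mu i)"

definition prob_of :: "(bool list \<Rightarrow> real) \<Rightarrow> bool list set \<Rightarrow> real" where
  "prob_of P A = (\<Sum>w\<in>A. P w)"

definition Omega :: "nat \<Rightarrow> nat \<Rightarrow> bool list set" where
  "Omega n c = {w \<in> words n. c \<le> card {i. i < n \<and> w ! i}}"

end

theory Submission
  imports Defs
begin

fun G :: "nat \<Rightarrow> (nat \<Rightarrow> bool list \<Rightarrow> real) \<Rightarrow> nat \<Rightarrow> real" where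
  "G 0 q c = (if c = 0 then 1 else 0)"
| "G (Suc n) q c = q 0 [] * G n (\<lambda>i h. q (Suc i) (True # h)) (c - 1)
     + (1 - q 0 []) * G n (\<lambda>i h. q (Suc i) (False # h)) c"

lemma Omega_alt: "Omega n c = {w. length w = n \<and> c \<le> length (filter id w)}"
  unfolding Omega_def words_def by (auto simp: length_filter_conv_card)

lemma words_Suc: "words (Suc n) = Cons True ` words n \<union> Cons False ` words n"
proof (rule set_eqI)
  fix w show "w \<in> words (Suc n) \<longleftrightarrow> w \<in> Cons True ` words n \<union> Cons False ` words n"
  proof (cases w)
    case Nil then show ?thesis by (auto simp: words_def)
  next
    case (Cons b v) then show ?thesis by (cases b) (auto simp: words_def)
  qed
qed
lemma finite_words: "finite (words n)"
  by (induction n) (auto simp: words_Suc, simp add: words_def)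

lemma finite_Omega: "finite (Omega n c)"
  by (rule finite_subset[OF _ finite_words[of n]]) (auto simp: Omega_def)

lemma Omega_Suc: "Omega (Suc n) c = Cons True ` Omega n (c - 1) \<union> Cons False ` Omega n c"
proof (rule set_eqI)
  fix w show "w \<in> Omega (Suc n) c \<longleftrightarrow> w \<in> Cons True ` Omega n (c - 1) \<union> Cons False ` Omega n c"
  proof (cases w)
    case Nil then show ?thesis by (auto simp: Omega_alt)
  next
    case (Cons b v) then show ?thesis by (cases b) (auto simp: Omega_alt)
  qed
qed

lemma cond_prob_Cons:
  "cond_prob (Suc n) q (b # w) = (if b then q 0 [] else 1 - q 0 []) * cond_prob n (\<lambda>i h. q (Suc i) (b # h)) w"
  unfolding cond_prob_def prod.lessThan_Suc_shift by (auto intro!: prod.cong arg_cong2[where f="(*)"])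

lemma prob_G: "prob_of (cond_prob n q) (Omega n c) = G n q c"
proof (induction n arbitrary: q c)
  case 0
  have "Omega 0 c = (if c = 0 then {[]} else {})" unfolding Omega_alt by auto
  then show ?case by (simp add: prob_of_def cond_prob_def)
next
  case (Suc n)
  have d: "Cons True ` Omega n (c - 1) \<inter> Cons False ` Omega n c = {}" by auto
  have "prob_of (cond_prob (Suc n) q) (Omega (Suc n) c)
     = sum (cond_prob (Suc n) q) (Cons True ` Omega n (c - 1)) + sum (cond_prob (Suc n) q) (Cons False ` Omega n c)"
    unfolding prob_of_def Omega_Suc by (rule sum.union_disjoint) (auto simp: finite_Omega)
  also have "sum (cond_prob (Suc n) q) (Cons True ` Omega n (c - 1))
     = q 0 [] * prob_of (cond_prob n (\<lambda>i h. q (Suc i) (True # h))) (Omega n (c - 1))"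
    by (simp add: sum.reindex cond_prob_Cons prob_of_def sum_distrib_left)
  also have "sum (cond_prob (Suc n) q) (Cons False ` Omega n c)
     = (1 - q 0 []) * prob_of (cond_prob n (\<lambda>i h. q (Suc i) (False # h))) (Omega n c)"
    by (simp add: sum.reindex cond_prob_Cons prob_of_def sum_distrib_left)
  finally show ?case using Suc.IH by simp
qed

lemma G_mono:
  assumes "\<forall>i<n. \<forall>h. 0 \<le> q i h \<and> q i h \<le> 1" "c' \<le> c"
  shows "G n q c \<le> G n q c'"
  using assms
proof (induction n arbitrary: q c c')
  case 0
  then show ?case by auto
next
  case (Suc n)
  have q0: "0 \<le> q 0 []" "q 0 [] \<le> 1" using Suc.prems by auto
  have a: "G n (\<lambda>i h. q (Suc i) (True # h)) (c - 1) \<le> G n (\<lambda>i h. q (Suc i) (True # h)) (c' - 1)"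
    by (rule Suc.IH) (use Suc.prems in auto)
  have b: "G n (\<lambda>i h. q (Suc i) (False # h)) c \<le> G n (\<lambda>i h. q (Suc i) (False # h)) c'"
    by (rule Suc.IH) (use Suc.prems in auto)
  show ?case using mult_left_mono[OF a q0(1)] mult_left_mono[OF b, of "1 - q 0 []"] q0 by simp
qed

lemma G_main:
  assumes "\<forall>i<n. \<forall>h. length h = i \<longrightarrow> 0 \<le> q i h \<and> q i h \<le> 1 \<and> q i h \<le> mu i"
    and "\<forall>i<n. 0 \<le> mu i \<and> mu i \<le> 1"
  shows "G n q c \<le> G n (\<lambda>i h. mu i) c"
  using assms
proof (induction n arbitrary: q mu c)
  case 0
  then show ?case by auto
next
  case (Suc n)
  have q0: "0 \<le> q 0 []" "q 0 [] \<le> 1" "q 0 [] \<le> mu 0" using Suc.prems by auto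
  define A where "A = G n (\<lambda>i h. mu (Suc i)) (c - 1)"
  define B where "B = G n (\<lambda>i h. mu (Suc i)) c"
  have a: "G n (\<lambda>i h. q (Suc i) (True # h)) (c - 1) \<le> A"
    unfolding A_def by (rule Suc.IH) (use Suc.prems in auto)
  have b: "G n (\<lambda>i h. q (Suc i) (False # h)) c \<le> B"
    unfolding B_def by (rule Suc.IH) (use Suc.prems in auto)
  have BA: "B \<le> A" unfolding A_def B_def by (rule G_mono) (use Suc.prems in auto)
  have "G (Suc n) q c \<le> q 0 [] * A + (1 - q 0 []) * B"
    using mult_left_mono[OF a q0(1)] mult_left_mono[OF b, of "1 - q 0 []"] q0 by simp
  also have "\<dots> = B + q 0 [] * (A - B)" by algebra
  also have "\<dots> \<le> B + mu 0 * (A - B)" using BA q0 by (simp add: mult_right_mono)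
  also have "\<dots> = G (Suc n) (\<lambda>i h. mu i) c" by (simp add: A_def B_def algebra_simps)
  finally show ?case .
qed

theorem mainTheorem14:
  fixes n c :: nat and mu :: "nat \<Rightarrow> real"
  assumes "n \<ge> 1"
    and "\<forall>i<n. 0 \<le> mu i \<and> mu i \<le> 1"
    and "c \<ge> 1"
  shows "Pstar n mu \<in> Pmu n mu
    \<and> (\<forall>P \<in> Pmu n mu. prob_of P (Omega n c) \<le> prob_of (Pstar n mu) (Omega n c))"
proof
  have ps: "Pstar n mu = cond_prob n (\<lambda>i h. mu i)"
    by (rule ext) (simp add: Pstar_def cond_prob_def)
  have "cond_prob n (\<lambda>i h. if i < n then mu i else 0) = cond_prob n (\<lambda>i h. mu i)"
    by (rule ext) (auto simp: cond_prob_def intro!: prod.cong)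
  then show "Pstar n mu \<in> Pmu n mu" unfolding Pmu_def ps
    by (intro CollectI exI[of _ "\<lambda>i h. if i < n then mu i else 0"]) (use assms(2) in auto)
  show "\<forall>P \<in> Pmu n mu. prob_of P (Omega n c) \<le> prob_of (Pstar n mu) (Omega n c)"
  proof
    fix P assume "P \<in> Pmu n mu"
    then obtain q where q1: "\<forall>i h. 0 \<le> q i h \<and> q i h \<le> 1"
      and q2: "\<forall>i<n. \<forall>h. length h = i \<longrightarrow> q i h \<le> mu i"
      and q3: "\<forall>w \<in> words n. P w = cond_prob n q w" unfolding Pmu_def by auto
    have "prob_of P (Omega n c) = prob_of (cond_prob n q) (Omega n c)"
      unfolding prob_of_def by (rule sum.cong) (auto simp: q3 Omega_def)
    also have "\<dots> = G n q c" by (rule prob_G)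
    also have "\<dots> \<le> G n (\<lambda>i h. mu i) c" by (rule G_main) (use q1 q2 assms(2) in auto)
    also have "\<dots> = prob_of (Pstar n mu) (Omega n c)" by (simp add: ps prob_G)
    finally show "prob_of P (Omega n c) \<le> prob_of (Pstar n mu) (Omega n c)" .
  qed
qed

end
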